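(* Let $A,B\in\mathcal{M}_{n\times n}$ with $A\neq 0$. Then the following are equivalent: (i) $A\parallel B$ in the operator norm $\|\cdot\|_\infty$; (ii) there exist unit vectors $x,y\in\mathcal{M}_{n\times 1}$ such that $\|A\|_\infty = x^*Ay$ and $|x^*By|=\|B\|_\infty$; (iii) for any matrix $U\in\mathcal{M}_{n\times k}$ whose orthonormal columns form a basis of the eigenspace of $AA^*$ corresponding to its largest eigenvalue, with $V=\frac{1}{\|A\|_\infty}A^*U\in\mathcal{M}_{n\times k}$, one has $-\|B\|_\infty\in W(\lambda U^*BV)$ for some $\lambda\in\mathbb{T}$.
   Context: $\mathcal{M}_{m\times n}$ denotes complex $m\times n$ matrices; $\|A\|_\infty$ is the largest singular value of $A$ (operator norm). $\mathbb{T}=\{\alpha\in\mathbb{C}:|\alpha|=1\}$. $A\parallel B$ in a norm $\|\cdot\|$ means $\|A+\lambda B\|=\|A\|+\|B\|$ for some $\lambda\in\mathbb{T}$. For a square matrix $T\in\mathcal{M}_{k\times k}$, $W(T)=\{\zeta^*T\zeta:\zeta\in\mathcal{M}_{k\times 1},\ \|\zeta\|=1\}$ is its numerical range. *)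

theory Defs
  imports Complex_Main "Jordan_Normal_Form.Char_Poly"
begin

text \<open>Complex matrices are rendered as Jordan_Normal_Form matrices of type complex mat,
  with explicit dimensions; column vectors in M_{m x 1} are complex vec.\<close>

definition vnorm :: "complex vec \<Rightarrow> real" where
  "vnorm v = sqrt (\<Sum>i<dim_vec v. (cmod (v $ i))\<^sup>2)"

definition adj :: "complex mat \<Rightarrow> complex mat" where
  "adj A = mat (dim_col A) (dim_row A) (\<lambda>(i, j). cnj (A $$ (j, i)))"

definition opnorm :: "complex mat \<Rightarrow> real" where
  "opnorm A = Sup {vnorm (A *\<^sub>v x) | x. x \<in> carrier_vec (dim_col A) \<and> vnorm x = 1}"

definition sform :: "complex vec \<Rightarrow> complex mat \<Rightarrow> complex vec \<Rightarrow> complex" where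
  "sform x M y = (\<Sum>i<dim_vec x. cnj (x $ i) * (M *\<^sub>v y) $ i)"

definition numerical_range :: "complex mat \<Rightarrow> complex set" where
  "numerical_range T = {sform z T z | z. z \<in> carrier_vec (dim_col T) \<and> vnorm z = 1}"

definition opnorm_parallel :: "complex mat \<Rightarrow> complex mat \<Rightarrow> bool" where
  "opnorm_parallel A B = (\<exists>l. cmod l = 1 \<and> opnorm (A + l \<cdot>\<^sub>m B) = opnorm A + opnorm B)"

text \<open>Largest eigenvalue of a (Hermitian) matrix, whose eigenvalues are real.\<close>
definition largest_eigenvalue :: "complex mat \<Rightarrow> real" where
  "largest_eigenvalue M = Max (Re ` {e. eigenvalue M e})"

definition eigenspace :: "complex mat \<Rightarrow> complex \<Rightarrow> complex vec set" where
  "eigenspace M e = {v \<in> carrier_vec (dim_row M). M *\<^sub>v v = e \<cdot>\<^sub>v v}"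

definition orthonormal_basis_mat :: "complex mat \<Rightarrow> complex vec set \<Rightarrow> bool" where
  "orthonormal_basis_mat U S =
     (adj U * U = 1\<^sub>m (dim_col U) \<and> {U *\<^sub>v c | c. c \<in> carrier_vec (dim_col U)} = S)"

end

theory Submission
  imports Defs "Jordan_Normal_Form.Gram_Schmidt" "Jordan_Normal_Form.Matrix_Kernel"
    "HOL-Analysis.Function_Topology" "HOL-Analysis.L2_Norm" "HOL-Analysis.Elementary_Metric_Spaces"
begin

definition ip :: "complex vec \<Rightarrow> complex vec \<Rightarrow> complex" where
  "ip x y = (\<Sum>i<dim_vec x. cnj (x $ i) * y $ i)"

lemma vnorm_L2: "vnorm v = L2_set (\<lambda>i. cmod (v $ i)) {..<dim_vec v}"
  by (simp add: vnorm_def L2_set_def)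

lemma vnorm_nonneg: "0 \<le> vnorm v" by (simp add: vnorm_def sum_nonneg)

lemma vnorm_sq: "(vnorm v)^2 = (\<Sum>i<dim_vec v. (cmod (v $ i))^2)"
  unfolding vnorm_def by (simp add: sum_nonneg)

lemma ip_self: "ip v v = complex_of_real ((vnorm v)^2)"
  unfolding ip_def vnorm_sq of_real_sum
  by (rule sum.cong) (simp_all only: complex_norm_square mult.commute)

lemma vnorm_zero: assumes "v \<in> carrier_vec n" "vnorm v = 0" shows "v = 0\<^sub>v n"
proof -
  have "(\<Sum>i<dim_vec v. (cmod (v $ i))^2) = 0" using assms(2) vnorm_sq[of v] by simp
  hence "\<forall>i\<in>{..<dim_vec v}. (cmod (v $ i))^2 = 0"
    by (subst sum_nonneg_eq_0_iff[symmetric]) auto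
  thus ?thesis using assms(1) by (intro eq_vecI) auto
qed

lemma vnorm_zero_vec[simp]: "vnorm (0\<^sub>v n) = 0" by (simp add: vnorm_def)

lemma vnorm_smult: "vnorm (c \<cdot>\<^sub>v v) = cmod c * vnorm v"
proof -
  have "vnorm (c \<cdot>\<^sub>v v) = L2_set (\<lambda>i. cmod c * cmod (v $ i)) {..<dim_vec v}"
    unfolding vnorm_L2 by (intro L2_set_cong) (auto simp: norm_mult)
  also have "\<dots> = cmod c * vnorm v" unfolding vnorm_L2 by (simp add: L2_set_right_distrib)
  finally show ?thesis .
qed

lemma vnorm_add_le: assumes "x \<in> carrier_vec n" "y \<in> carrier_vec n"
  shows "vnorm (x + y) \<le> vnorm x + vnorm y"
proof -
  have "vnorm (x + y) = L2_set (\<lambda>i. cmod (x $ i + y $ i)) {..<n}"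
    using assms unfolding vnorm_L2 by (intro L2_set_cong) auto
  also have "\<dots> \<le> L2_set (\<lambda>i. cmod (x $ i) + cmod (y $ i)) {..<n}"
    by (intro L2_set_mono norm_triangle_ineq) auto
  also have "\<dots> \<le> L2_set (\<lambda>i. cmod (x $ i)) {..<n} + L2_set (\<lambda>i. cmod (y $ i)) {..<n}"
    by (rule L2_set_triangle_ineq)
  also have "\<dots> = vnorm x + vnorm y" using assms unfolding vnorm_L2 by simp
  finally show ?thesis .
qed

lemma ip_CS: assumes "x \<in> carrier_vec n" "y \<in> carrier_vec n"
  shows "cmod (ip x y) \<le> vnorm x * vnorm y"
proof -
  have "cmod (ip x y) \<le> (\<Sum>i<n. cmod (cnj (x $ i) * y $ i))"
    unfolding ip_def using assms by (simp add: norm_sum)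
  also have "\<dots> = (\<Sum>i<n. \<bar>cmod (x $ i)\<bar> * \<bar>cmod (y $ i)\<bar>)" by (simp add: norm_mult)
  also have "\<dots> \<le> L2_set (\<lambda>i. cmod (x $ i)) {..<n} * L2_set (\<lambda>i. cmod (y $ i)) {..<n}"
    by (rule L2_set_mult_ineq)
  also have "\<dots> = vnorm x * vnorm y" using assms unfolding vnorm_L2 by simp
  finally show ?thesis .
qed

lemma ip_add_right: "x \<in> carrier_vec n \<Longrightarrow> y \<in> carrier_vec n \<Longrightarrow> z \<in> carrier_vec n \<Longrightarrow>
  ip x (y + z) = ip x y + ip x z"
  unfolding ip_def by (simp add: distrib_left sum.distrib)

lemma ip_minus_right: "x \<in> carrier_vec n \<Longrightarrow> y \<in> carrier_vec n \<Longrightarrow> z \<in> carrier_vec n \<Longrightarrow>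
  ip x (y - z) = ip x y - ip x z"
  unfolding ip_def by (simp add: right_diff_distrib sum_subtractf)

lemma ip_add_left: "x \<in> carrier_vec n \<Longrightarrow> y \<in> carrier_vec n \<Longrightarrow> z \<in> carrier_vec n \<Longrightarrow>
  ip (y + z) x = ip y x + ip z x"
  unfolding ip_def by (simp add: distrib_right sum.distrib)

lemma ip_minus_left: "x \<in> carrier_vec n \<Longrightarrow> y \<in> carrier_vec n \<Longrightarrow> z \<in> carrier_vec n \<Longrightarrow>
  ip (y - z) x = ip y x - ip z x"
  unfolding ip_def by (simp add: left_diff_distrib sum_subtractf)

lemma ip_smult_right: "x \<in> carrier_vec n \<Longrightarrow> y \<in> carrier_vec n \<Longrightarrow>
  ip x (c \<cdot>\<^sub>v y) = c * ip x y"
  unfolding ip_def by (simp add: sum_distrib_left mult_ac)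

lemma ip_smult_left: "x \<in> carrier_vec n \<Longrightarrow> y \<in> carrier_vec n \<Longrightarrow>
  ip (c \<cdot>\<^sub>v x) y = cnj c * ip x y"
  unfolding ip_def by (simp add: sum_distrib_left mult_ac)

lemma ip_swap: "x \<in> carrier_vec n \<Longrightarrow> y \<in> carrier_vec n \<Longrightarrow> ip y x = cnj (ip x y)"
  unfolding ip_def by (simp add: cnj_sum mult.commute)

lemma adj_carrier[simp]: "A \<in> carrier_mat m k \<Longrightarrow> adj A \<in> carrier_mat k m"
  by (simp add: adj_def)

lemma adj_dims[simp]: "dim_row (adj A) = dim_col A" "dim_col (adj A) = dim_row A"
  by (simp_all add: adj_def)

lemma adj_index[simp]: "i < dim_col A \<Longrightarrow> j < dim_row A \<Longrightarrow> adj A $$ (i,j) = cnj (A $$ (j,i))"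
  by (simp add: adj_def)

lemma adj_adj[simp]: "adj (adj A) = A"
  by (intro eq_matI) auto

lemma ip_adj: assumes A: "A \<in> carrier_mat m k" and x: "x \<in> carrier_vec m" and y: "y \<in> carrier_vec k"
  shows "ip x (A *\<^sub>v y) = ip (adj A *\<^sub>v x) y"
proof -
  have "ip x (A *\<^sub>v y) = (\<Sum>i<m. \<Sum>j<k. cnj (x$i) * A$$(i,j) * y$j)"
    using A x y by (simp add: ip_def mult_mat_vec_def scalar_prod_def sum_distrib_left atLeast0LessThan mult.assoc)
  also have "\<dots> = (\<Sum>j<k. \<Sum>i<m. cnj (x$i) * A$$(i,j) * y$j)" by (rule sum.swap)
  also have "\<dots> = ip (adj A *\<^sub>v x) y"
    using A x y by (simp add: ip_def mult_mat_vec_def scalar_prod_def sum_distrib_right sum_distrib_left atLeast0LessThan cnj_sum mult_ac)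
  finally show ?thesis .
qed

lemma opnorm_attain:
  assumes M: "M \<in> carrier_mat m n" and n: "0 < n"
  shows "\<exists>y\<in>carrier_vec n. vnorm y = 1 \<and> vnorm (M *\<^sub>v y) = opnorm M \<and>
           (\<forall>x\<in>carrier_vec n. vnorm x = 1 \<longrightarrow> vnorm (M *\<^sub>v x) \<le> opnorm M)"
proof -
  define S where "S = {f::nat \<Rightarrow> complex. (\<forall>i. (if n \<le> i then f i else 0) = 0) \<and> (\<Sum>i<n. (cmod (f i))^2) = 1}"
  define Kc where "Kc = (\<lambda>p::real\<times>real. complex_of_real (fst p) + \<i> * complex_of_real (snd p)) ` (cball 0 1 \<times> cball 0 1)"
  define K where "K = PiE UNIV (\<lambda>i::nat. if i < n then Kc else {0::complex})"
  have cKc: "compact Kc" unfolding Kc_def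
    by (intro compact_continuous_image compact_Times compact_cball continuous_intros)
  have "compactin (product_topology (\<lambda>i. euclidean) UNIV) K"
    unfolding K_def compactin_PiE using cKc by (auto simp: compactin_euclidean_iff)
  hence cK: "compact K" by (simp add: euclidean_product_topology compactin_euclidean_iff)
  have coord[continuous_intros]: "\<And>A i. continuous_on A (\<lambda>f::nat\<Rightarrow>complex. f i)"
    by (rule continuous_on_subset[OF continuous_on_product_coordinates]) auto
  have cl1: "closed {f::nat\<Rightarrow>complex. (if n \<le> i then f i else 0) = 0}" for i
    by (cases "n \<le> i") (auto intro!: closed_Collect_eq continuous_intros)
  have clS: "closed S" unfolding S_def
    by (intro closed_Collect_conj closed_Collect_all cl1 closed_Collect_eq continuous_intros)
  have SK: "S \<subseteq> K"
  proof
    fix f assume f: "f \<in> S"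
    have "f i \<in> Kc" if i: "i < n" for i
    proof -
      have "(cmod (f i))^2 \<le> (\<Sum>i<n. (cmod (f i))^2)"
        by (rule member_le_sum) (use i in auto)
      hence "(cmod (f i))^2 \<le> 1^2" using f by (simp add: S_def)
      hence c: "cmod (f i) \<le> 1" by (rule power2_le_imp_le) simp
      have "\<bar>Re (f i)\<bar> \<le> 1" "\<bar>Im (f i)\<bar> \<le> 1"
        using abs_Re_le_cmod[of "f i"] abs_Im_le_cmod[of "f i"] c by linarith+
      thus ?thesis unfolding Kc_def
        by (intro image_eqI[of _ _ "(Re (f i), Im (f i))"]) (auto simp: complex_eq_iff dist_real_def)
    qed
    moreover have "f i = 0" if "\<not> i < n" for i
    proof -
      from f have "(if n \<le> i then f i else 0) = 0" unfolding S_def by blast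
      thus ?thesis using that by simp
    qed
    ultimately show "f \<in> K" unfolding K_def by (auto simp: PiE_iff)
  qed
  have cS: "compact S" using compact_Int_closed[OF cK clS] SK by (simp add: Int_absorb1)
  have "(\<lambda>i. if i = 0 then 1 else 0) \<in> S"
  proof -
    have "(\<Sum>i<n. (cmod (if i = 0 then 1 else (0::complex)))^2) = (\<Sum>i<n. if i = 0 then 1 else 0)"
      by (rule sum.cong) auto
    also have "\<dots> = 1" using n by simp
    finally show ?thesis unfolding S_def using n by auto
  qed
  hence Sne: "S \<noteq> {}" by auto
  define g where "g f = vnorm (M *\<^sub>v vec n f)" for f
  have g_eq: "g = (\<lambda>f. sqrt (\<Sum>i<m. (cmod (\<Sum>j<n. M $$ (i,j) * f j))^2))"
    using M by (auto simp: g_def vnorm_def mult_mat_vec_def scalar_prod_def atLeast0LessThan intro!: ext sum.cong)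
  have cont: "continuous_on S g" unfolding g_eq by (intro continuous_intros)
  obtain f0 where f0: "f0 \<in> S" "\<And>f. f \<in> S \<Longrightarrow> g f \<le> g f0"
    using continuous_attains_sup[OF cS Sne cont] by auto
  define y where "y = vec n f0"
  have y: "y \<in> carrier_vec n" "vnorm y = 1" using f0(1) by (auto simp: y_def vnorm_def S_def)
  have bound: "vnorm (M *\<^sub>v x) \<le> g f0" if x: "x \<in> carrier_vec n" "vnorm x = 1" for x
  proof -
    define f where "f i = (if i < n then x $ i else 0)" for i
    have "f \<in> S" using x vnorm_sq[of x] unfolding S_def f_def by auto
    moreover have "vec n f = x" using x by (auto simp: f_def)
    ultimately show ?thesis using f0(2)[of f] by (simp add: g_def)
  qed
  have gy: "g f0 = vnorm (M *\<^sub>v y)" by (simp add: g_def y_def)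
  have "opnorm M = g f0" unfolding opnorm_def using M
    by (intro cSup_eq_maximum) (use y gy bound in auto)
  thus ?thesis using y bound gy by auto
qed


lemma sform_ip: "sform x M y = ip x (M *\<^sub>v y)"
  by (simp add: sform_def ip_def)

lemma smult_mat_mult_vec: "A \<in> carrier_mat m k \<Longrightarrow> v \<in> carrier_vec k \<Longrightarrow>
  (c \<cdot>\<^sub>m A) *\<^sub>v v = c \<cdot>\<^sub>v (A *\<^sub>v v)"
  by (intro eq_vecI) (auto simp: mult_mat_vec_def scalar_prod_def sum_distrib_left mult.assoc)

lemma mult_zero_vec': "M \<in> carrier_mat m n \<Longrightarrow> M *\<^sub>v 0\<^sub>v n = 0\<^sub>v m"
  by (intro eq_vecI) (auto simp: mult_mat_vec_def scalar_prod_def)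

lemma vnorm_pos_dim: "vnorm x \<noteq> 0 \<Longrightarrow> x \<in> carrier_vec n \<Longrightarrow> 0 < n"
  by (cases n) (auto simp: vnorm_def)

lemma opnorm_nonneg: "M \<in> carrier_mat m n \<Longrightarrow> 0 < n \<Longrightarrow> 0 \<le> opnorm M"
proof -
  assume M: "M \<in> carrier_mat m n" and n: "0 < n"
  obtain y where "vnorm (M *\<^sub>v y) = opnorm M" using opnorm_attain[OF M n] by blast
  thus ?thesis using vnorm_nonneg[of "M *\<^sub>v y"] by simp
qed

lemma opnorm_le: assumes M: "M \<in> carrier_mat m n" and x: "x \<in> carrier_vec n"
  shows "vnorm (M *\<^sub>v x) \<le> opnorm M * vnorm x"
proof (cases "vnorm x = 0")
  case True
  hence "x = 0\<^sub>v n" using vnorm_zero x by blast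
  thus ?thesis using M True by (simp add: mult_zero_vec')
next
  case False
  have n: "0 < n" using vnorm_pos_dim[OF False x] .
  define r where "r = vnorm x"
  have r: "0 < r" using False vnorm_nonneg[of x] unfolding r_def by linarith
  define x' where "x' = complex_of_real (1 / r) \<cdot>\<^sub>v x"
  have x': "x' \<in> carrier_vec n" "vnorm x' = 1" using x r
    by (auto simp: x'_def vnorm_smult r_def norm_divide)
  have "vnorm (M *\<^sub>v x') \<le> opnorm M" using opnorm_attain[OF M n] x' by blast
  also have "M *\<^sub>v x' = complex_of_real (1 / r) \<cdot>\<^sub>v (M *\<^sub>v x)"
    unfolding x'_def by (rule mult_mat_vec[OF M x])
  finally have "(1 / r) * vnorm (M *\<^sub>v x) \<le> opnorm M" using r by (simp add: vnorm_smult norm_divide)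
  thus ?thesis using r unfolding r_def[symmetric] by (simp add: field_simps)
qed

lemma opnorm_pos: assumes A: "A \<in> carrier_mat n n" and A0: "A \<noteq> 0\<^sub>m n n"
  shows "0 < n" "0 < opnorm A"
proof -
  obtain i j where ij: "i < n" "j < n" "A $$ (i,j) \<noteq> 0"
  proof -
    have "\<not> (\<forall>i<n. \<forall>j<n. A $$ (i,j) = 0)"
    proof
      assume "\<forall>i<n. \<forall>j<n. A $$ (i,j) = 0"
      hence "A = 0\<^sub>m n n" using A by (intro eq_matI) auto
      thus False using A0 by simp
    qed
    thus ?thesis using that by blast
  qed
  show n: "0 < n" using ij by auto
  have e: "unit_vec n j \<in> carrier_vec n" "vnorm (unit_vec n j) = 1"
  proof -
    show "unit_vec n j \<in> carrier_vec n" by simp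
    have "(\<Sum>i<n. (cmod (unit_vec n j $ i))^2) = (\<Sum>i<n. if i = j then 1 else 0)"
      by (rule sum.cong) (auto simp: unit_vec_def)
    also have "\<dots> = 1" using ij by simp
    finally show "vnorm (unit_vec n j) = 1" by (simp add: vnorm_def)
  qed
  have ai: "(A *\<^sub>v unit_vec n j) $ i = A $$ (i,j)" using A ij by simp
  have "cmod ((A *\<^sub>v unit_vec n j) $ i) \<le> L2_set (\<lambda>i. cmod ((A *\<^sub>v unit_vec n j) $ i)) {..<dim_vec (A *\<^sub>v unit_vec n j)}"
    by (rule member_le_L2_set) (use A ij in auto)
  hence "cmod (A $$ (i,j)) \<le> vnorm (A *\<^sub>v unit_vec n j)" using ai unfolding vnorm_L2 by simp
  also have "\<dots> \<le> opnorm A" using opnorm_attain[OF A n] e by blast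
  finally have "cmod (A $$ (i,j)) \<le> opnorm A" .
  moreover have "0 < cmod (A $$ (i,j))" using ij by simp
  ultimately show "0 < opnorm A" by linarith
qed

lemma cx_lemma:
  fixes s t l :: complex and a b :: real
  assumes "cmod s \<le> a" "cmod t \<le> b" "cmod l = 1" "s + l * t = complex_of_real (a + b)"
  shows "s = complex_of_real a" "cmod t = b"
proof -
  have re: "Re s + Re (l * t) = a + b" using arg_cong[OF assms(4), of Re] by simp
  have "Re s \<le> a" using complex_Re_le_cmod[of s] assms(1) by linarith
  moreover have "Re (l * t) \<le> cmod t" using complex_Re_le_cmod[of "l * t"] assms(3) by (simp add: norm_mult)
  ultimately have ra: "Re s = a" and rb: "cmod t = b" using re assms(2) by linarith+
  show "cmod t = b" by (rule rb)
  have "(cmod s)^2 \<le> a^2" using assms(1) norm_ge_zero power_mono by blast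
  hence "(Re s)^2 + (Im s)^2 \<le> a^2" by (simp add: cmod_power2)
  hence "Im s = 0" using ra by simp
  thus "s = complex_of_real a" using ra by (simp add: complex_eq_iff)
qed

lemma close_lemma:
  assumes u: "u \<in> carrier_vec n" and v: "v \<in> carrier_vec n" and vn: "vnorm v = 1"
    and un: "vnorm u \<le> a" and ip: "ip v u = complex_of_real a"
  shows "u = complex_of_real a \<cdot>\<^sub>v v"
proof -
  define w where "w = u - complex_of_real a \<cdot>\<^sub>v v"
  have w: "w \<in> carrier_vec n" using u v by (simp add: w_def)
  have av: "complex_of_real a \<cdot>\<^sub>v v \<in> carrier_vec n" using v by simp
  have ipuv: "ip u v = complex_of_real a" using ip_swap[OF v u] ip by simp
  have ipvv: "ip v v = 1" using ip_self[of v] vn by simp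
  have "ip w w = ip u u - ip u (complex_of_real a \<cdot>\<^sub>v v) - (ip (complex_of_real a \<cdot>\<^sub>v v) u - ip (complex_of_real a \<cdot>\<^sub>v v) (complex_of_real a \<cdot>\<^sub>v v))"
    unfolding w_def using u v av w
    by (simp add: ip_minus_left[OF _ u av] ip_minus_left[OF _ u av] ip_minus_right[OF u u av] ip_minus_right[OF av u av])
  also have "\<dots> = ip u u - complex_of_real (a^2)"
    using u v ip ipuv ipvv by (simp add: ip_smult_left[OF v] ip_smult_right ip_smult_left power2_eq_square)
  finally have "complex_of_real ((vnorm w)^2) = complex_of_real ((vnorm u)^2 - a^2)"
    by (simp add: ip_self)
  hence "(vnorm w)^2 = (vnorm u)^2 - a^2" using of_real_eq_iff by blast
  moreover have "(vnorm u)^2 \<le> a^2" using un vnorm_nonneg power_mono by blast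
  ultimately have "(vnorm w)^2 \<le> 0" by simp
  hence "vnorm w = 0" using vnorm_nonneg[of w] by (simp add: power2_eq_square mult_le_0_iff antisym)
  hence "w = 0\<^sub>v n" using vnorm_zero w by blast
  show ?thesis
  proof (rule eq_vecI)
    fix i assume i: "i < dim_vec (complex_of_real a \<cdot>\<^sub>v v)"
    have "w $ i = 0" using \<open>w = 0\<^sub>v n\<close> v i by simp
    thus "u $ i = (complex_of_real a \<cdot>\<^sub>v v) $ i" using u v i unfolding w_def by simp
  qed (use u v in simp)
qed

lemma adj_bound: assumes A: "A \<in> carrier_mat m n" and x: "x \<in> carrier_vec m" and n: "0 < n"
  shows "vnorm (adj A *\<^sub>v x) \<le> opnorm A * vnorm x"
proof -
  define z where "z = adj A *\<^sub>v x"
  have z: "z \<in> carrier_vec n" unfolding z_def by (rule mult_mat_vec_carrier[OF adj_carrier[OF A] x])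
  have "complex_of_real ((vnorm z)^2) = ip z z" by (simp add: ip_self)
  also have "\<dots> = ip x (A *\<^sub>v z)" unfolding z_def using ip_adj[OF A x z] z_def by simp
  finally have "(vnorm z)^2 = Re (ip x (A *\<^sub>v z))" by (metis Re_complex_of_real)
  also have "\<dots> \<le> cmod (ip x (A *\<^sub>v z))" by (rule complex_Re_le_cmod)
  also have "\<dots> \<le> vnorm x * vnorm (A *\<^sub>v z)" using A x z by (intro ip_CS) auto
  also have "\<dots> \<le> vnorm x * (opnorm A * vnorm z)"
    by (intro mult_left_mono opnorm_le[OF A z] vnorm_nonneg)
  finally have *: "vnorm z * vnorm z \<le> vnorm z * (opnorm A * vnorm x)" by (simp add: power2_eq_square mult_ac)
  show ?thesis
  proof (cases "vnorm z = 0")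
    case True
    have "0 \<le> opnorm A * vnorm x" using opnorm_nonneg[OF A n] vnorm_nonneg by simp
    thus ?thesis using True z_def by simp
  next
    case False
    hence "0 < vnorm z" using vnorm_nonneg[of z] by linarith
    thus ?thesis using * z_def by simp
  qed
qed


lemma C_mult: assumes A: "A \<in> carrier_mat n n" and B: "B \<in> carrier_mat n n" and y: "y \<in> carrier_vec n"
  shows "(A + l \<cdot>\<^sub>m B) *\<^sub>v y = A *\<^sub>v y + l \<cdot>\<^sub>v (B *\<^sub>v y)"
proof -
  have lB: "l \<cdot>\<^sub>m B \<in> carrier_mat n n" using B by simp
  have "(A + l \<cdot>\<^sub>m B) *\<^sub>v y = A *\<^sub>v y + (l \<cdot>\<^sub>m B) *\<^sub>v y"
    by (rule add_mult_distrib_mat_vec[OF A lB y])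
  also have "(l \<cdot>\<^sub>m B) *\<^sub>v y = l \<cdot>\<^sub>v (B *\<^sub>v y)" by (rule smult_mat_mult_vec[OF B y])
  finally show ?thesis .
qed

lemma unit_bound: assumes M: "M \<in> carrier_mat n n" and x: "x \<in> carrier_vec n" and y: "y \<in> carrier_vec n"
  and xn: "vnorm x = 1" and yn: "vnorm y = 1"
  shows "cmod (ip x (M *\<^sub>v y)) \<le> opnorm M"
proof -
  have My: "M *\<^sub>v y \<in> carrier_vec n" using M y by simp
  have "cmod (ip x (M *\<^sub>v y)) \<le> vnorm x * vnorm (M *\<^sub>v y)" by (rule ip_CS[OF x My])
  also have "\<dots> = vnorm (M *\<^sub>v y)" using xn by simp
  also have "\<dots> \<le> opnorm M * vnorm y" by (rule opnorm_le[OF M y])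
  finally show ?thesis using yn by simp
qed

lemma par_to_ii:
  assumes A: "A \<in> carrier_mat n n" and B: "B \<in> carrier_mat n n" and n: "0 < n" and a: "0 < opnorm A"
    and par: "opnorm_parallel A B"
  shows "\<exists>x y. x \<in> carrier_vec n \<and> y \<in> carrier_vec n \<and> vnorm x = 1 \<and> vnorm y = 1 \<and>
                 complex_of_real (opnorm A) = sform x A y \<and> cmod (sform x B y) = opnorm B"
proof -
  obtain l where l: "cmod l = 1" "opnorm (A + l \<cdot>\<^sub>m B) = opnorm A + opnorm B"
    using par unfolding opnorm_parallel_def by blast
  define C where "C = A + l \<cdot>\<^sub>m B"
  have C: "C \<in> carrier_mat n n" using A B by (simp add: C_def)
  obtain y where y: "y \<in> carrier_vec n" "vnorm y = 1" "vnorm (C *\<^sub>v y) = opnorm C"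
    using opnorm_attain[OF C n] by blast
  define s where "s = opnorm A + opnorm B"
  have s: "0 < s" using a opnorm_nonneg[OF B n] by (simp add: s_def)
  have Cy: "vnorm (C *\<^sub>v y) = s" using y l by (simp add: C_def s_def)
  have Cyc: "C *\<^sub>v y \<in> carrier_vec n" using C y by simp
  define x where "x = complex_of_real (1/s) \<cdot>\<^sub>v (C *\<^sub>v y)"
  have x: "x \<in> carrier_vec n" using Cyc by (simp add: x_def)
  have xn: "vnorm x = 1" using s Cy by (simp add: x_def vnorm_smult norm_divide)
  have "ip x (C *\<^sub>v y) = cnj (complex_of_real (1/s)) * ip (C *\<^sub>v y) (C *\<^sub>v y)"
    unfolding x_def by (rule ip_smult_left[OF Cyc Cyc])
  also have "\<dots> = complex_of_real ((1/s) * s^2)" by (simp add: ip_self Cy)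
  also have "(1/s) * s^2 = s" using s by (simp add: power2_eq_square)
  finally have ipC: "ip x (C *\<^sub>v y) = complex_of_real s" .
  have Ay: "A *\<^sub>v y \<in> carrier_vec n" "B *\<^sub>v y \<in> carrier_vec n" using A B y by auto
  have lBy: "l \<cdot>\<^sub>v (B *\<^sub>v y) \<in> carrier_vec n" using Ay by simp
  have "C *\<^sub>v y = A *\<^sub>v y + l \<cdot>\<^sub>v (B *\<^sub>v y)" unfolding C_def by (rule C_mult[OF A B y(1)])
  hence "ip x (C *\<^sub>v y) = ip x (A *\<^sub>v y) + l * ip x (B *\<^sub>v y)"
    using ip_add_right[OF x Ay(1) lBy] ip_smult_right[OF x Ay(2)] by simp
  hence eq: "ip x (A *\<^sub>v y) + l * ip x (B *\<^sub>v y) = complex_of_real (opnorm A + opnorm B)"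
    using ipC s_def by simp
  have bA: "cmod (ip x (A *\<^sub>v y)) \<le> opnorm A" by (rule unit_bound[OF A x y(1) xn y(2)])
  have bB: "cmod (ip x (B *\<^sub>v y)) \<le> opnorm B" by (rule unit_bound[OF B x y(1) xn y(2)])
  from cx_lemma[OF bA bB l(1) eq] show ?thesis
    using x y xn unfolding sform_ip by metis
qed

lemma ii_to_par:
  assumes A: "A \<in> carrier_mat n n" and B: "B \<in> carrier_mat n n" and n: "0 < n"
    and x: "x \<in> carrier_vec n" and y: "y \<in> carrier_vec n" and xn: "vnorm x = 1" and yn: "vnorm y = 1"
    and sa: "complex_of_real (opnorm A) = sform x A y" and sb: "cmod (sform x B y) = opnorm B"
  shows "opnorm_parallel A B"
proof -
  define t where "t = ip x (B *\<^sub>v y)"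
  define l where "l = (if t = 0 then 1 else cnj t / complex_of_real (cmod t))"
  have l: "cmod l = 1" by (simp add: l_def norm_divide)
  have lt: "l * t = complex_of_real (cmod t)"
  proof (cases "t = 0")
    case True thus ?thesis by (simp add: l_def)
  next
    case False
    have "l * t = (cnj t * t) / complex_of_real (cmod t)" using False by (simp add: l_def)
    also have "cnj t * t = complex_of_real (cmod t) * complex_of_real (cmod t)"
      by (metis complex_norm_square mult.commute of_real_mult power2_eq_square)
    finally show ?thesis using False by simp
  qed
  define C where "C = A + l \<cdot>\<^sub>m B"
  have C: "C \<in> carrier_mat n n" using A B by (simp add: C_def)
  have Ay: "A *\<^sub>v y \<in> carrier_vec n" "B *\<^sub>v y \<in> carrier_vec n" using A B y by auto
  have lBy: "l \<cdot>\<^sub>v (B *\<^sub>v y) \<in> carrier_vec n" using Ay by simp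
  have "C *\<^sub>v y = A *\<^sub>v y + l \<cdot>\<^sub>v (B *\<^sub>v y)" unfolding C_def by (rule C_mult[OF A B y])
  hence "ip x (C *\<^sub>v y) = ip x (A *\<^sub>v y) + l * t"
    using ip_add_right[OF x Ay(1) lBy] ip_smult_right[OF x Ay(2)] by (simp add: t_def)
  also have "\<dots> = complex_of_real (opnorm A + opnorm B)"
    using sa sb lt unfolding sform_ip t_def by simp
  finally have ipC: "ip x (C *\<^sub>v y) = complex_of_real (opnorm A + opnorm B)" .
  have nn: "0 \<le> opnorm A + opnorm B" using opnorm_nonneg[OF A n] opnorm_nonneg[OF B n] by simp
  have "opnorm A + opnorm B = cmod (complex_of_real (opnorm A + opnorm B))"
    using nn by (simp only: norm_of_real abs_of_nonneg)
  also have "\<dots> = cmod (ip x (C *\<^sub>v y))" by (simp only: ipC)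
  also have "\<dots> \<le> opnorm C" by (rule unit_bound[OF C x y xn yn])
  finally have low: "opnorm A + opnorm B \<le> opnorm C" .
  obtain y0 where y0: "y0 \<in> carrier_vec n" "vnorm y0 = 1" "vnorm (C *\<^sub>v y0) = opnorm C"
    using opnorm_attain[OF C n] by blast
  have Ay0: "A *\<^sub>v y0 \<in> carrier_vec n" "B *\<^sub>v y0 \<in> carrier_vec n" using A B y0 by auto
  have "opnorm C = vnorm (A *\<^sub>v y0 + l \<cdot>\<^sub>v (B *\<^sub>v y0))"
    using y0 C_mult[OF A B y0(1)] by (simp add: C_def)
  also have "\<dots> \<le> vnorm (A *\<^sub>v y0) + vnorm (l \<cdot>\<^sub>v (B *\<^sub>v y0))"
    by (rule vnorm_add_le[OF Ay0(1)]) (use Ay0 in simp)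
  also have "\<dots> = vnorm (A *\<^sub>v y0) + vnorm (B *\<^sub>v y0)" using l by (simp add: vnorm_smult)
  also have "\<dots> \<le> opnorm A + opnorm B"
    using opnorm_le[OF A y0(1)] opnorm_le[OF B y0(1)] y0(2) by simp
  finally have "opnorm C = opnorm A + opnorm B" using low by simp
  thus ?thesis unfolding opnorm_parallel_def C_def using l by blast
qed


lemma K1:
  assumes A: "A \<in> carrier_mat n n" and n: "0 < n"
    and x: "x \<in> carrier_vec n" and y: "y \<in> carrier_vec n" and xn: "vnorm x = 1" and yn: "vnorm y = 1"
    and ipa: "ip x (A *\<^sub>v y) = complex_of_real (opnorm A)"
  shows "A *\<^sub>v y = complex_of_real (opnorm A) \<cdot>\<^sub>v x" "adj A *\<^sub>v x = complex_of_real (opnorm A) \<cdot>\<^sub>v y"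
proof -
  have Ay: "A *\<^sub>v y \<in> carrier_vec n" using A y by simp
  have Ax: "adj A *\<^sub>v x \<in> carrier_vec n" using adj_carrier[OF A] x by simp
  show "A *\<^sub>v y = complex_of_real (opnorm A) \<cdot>\<^sub>v x"
    by (rule close_lemma[OF Ay x xn _ ipa]) (use opnorm_le[OF A y] yn in simp)
  have "ip y (adj A *\<^sub>v x) = cnj (ip (adj A *\<^sub>v x) y)" by (rule ip_swap[OF Ax y])
  also have "ip (adj A *\<^sub>v x) y = ip x (A *\<^sub>v y)" using ip_adj[OF A x y] by simp
  finally have ip2: "ip y (adj A *\<^sub>v x) = complex_of_real (opnorm A)" using ipa by simp
  show "adj A *\<^sub>v x = complex_of_real (opnorm A) \<cdot>\<^sub>v y"
    by (rule close_lemma[OF Ax y yn _ ip2]) (use adj_bound[OF A x n] xn in simp)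
qed

lemma M_vec: assumes A: "A \<in> carrier_mat n n" and x: "x \<in> carrier_vec n"
  shows "(A * adj A) *\<^sub>v x = A *\<^sub>v (adj A *\<^sub>v x)"
  by (rule assoc_mult_mat_vec[OF A adj_carrier[OF A] x])

lemma ip_M: assumes A: "A \<in> carrier_mat n n" and x: "x \<in> carrier_vec n"
  shows "ip x ((A * adj A) *\<^sub>v x) = complex_of_real ((vnorm (adj A *\<^sub>v x))^2)"
proof -
  have Ax: "adj A *\<^sub>v x \<in> carrier_vec n" using adj_carrier[OF A] x by simp
  have "ip x ((A * adj A) *\<^sub>v x) = ip x (A *\<^sub>v (adj A *\<^sub>v x))" by (simp add: M_vec[OF A x])
  also have "\<dots> = ip (adj A *\<^sub>v x) (adj A *\<^sub>v x)" by (rule ip_adj[OF A x Ax])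
  finally show ?thesis by (simp add: ip_self)
qed

lemma M_bound: assumes A: "A \<in> carrier_mat n n" and n: "0 < n" and e: "eigenvalue (A * adj A) e"
  shows "Re e \<le> (opnorm A)^2"
proof -
  obtain v where v: "v \<in> carrier_vec n" "v \<noteq> 0\<^sub>v n" "(A * adj A) *\<^sub>v v = e \<cdot>\<^sub>v v"
    using e A unfolding eigenvalue_def eigenvector_def by auto
  have vpos: "0 < vnorm v" using v vnorm_zero[OF v(1)] vnorm_nonneg[of v] by force
  have "complex_of_real ((vnorm (adj A *\<^sub>v v))^2) = ip v (e \<cdot>\<^sub>v v)" using ip_M[OF A v(1)] v(3) by simp
  also have "\<dots> = e * complex_of_real ((vnorm v)^2)" by (simp add: ip_smult_right[OF v(1) v(1)] ip_self)
  finally have eq: "complex_of_real ((vnorm (adj A *\<^sub>v v))^2) = e * complex_of_real ((vnorm v)^2)" .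
  have "Re e * (vnorm v)^2 = (vnorm (adj A *\<^sub>v v))^2"
    using arg_cong[OF eq, of Re] by (simp del: of_real_power)
  also have "\<dots> \<le> (opnorm A * vnorm v)^2"
    using adj_bound[OF A v(1) n] vnorm_nonneg by (intro power_mono) auto
  also have "\<dots> = (opnorm A)^2 * (vnorm v)^2" by (simp add: power_mult_distrib)
  finally show ?thesis using vpos by simp
qed

lemma top_vec: assumes A: "A \<in> carrier_mat n n" and n: "0 < n" and a: "0 < opnorm A"
  shows "\<exists>x\<in>carrier_vec n. vnorm x = 1 \<and> (A * adj A) *\<^sub>v x = complex_of_real ((opnorm A)^2) \<cdot>\<^sub>v x"
proof -
  obtain y where y: "y \<in> carrier_vec n" "vnorm y = 1" "vnorm (A *\<^sub>v y) = opnorm A"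
    using opnorm_attain[OF A n] by blast
  have Ay: "A *\<^sub>v y \<in> carrier_vec n" using A y by simp
  define x where "x = complex_of_real (1 / opnorm A) \<cdot>\<^sub>v (A *\<^sub>v y)"
  have x: "x \<in> carrier_vec n" using Ay by (simp add: x_def)
  have xn: "vnorm x = 1" using a y by (simp add: x_def vnorm_smult norm_divide)
  have "ip x (A *\<^sub>v y) = cnj (complex_of_real (1 / opnorm A)) * ip (A *\<^sub>v y) (A *\<^sub>v y)"
    unfolding x_def by (rule ip_smult_left[OF Ay Ay])
  also have "\<dots> = complex_of_real ((1 / opnorm A) * (opnorm A)^2)" by (simp add: ip_self y)
  also have "(1 / opnorm A) * (opnorm A)^2 = opnorm A" using a by (simp add: power2_eq_square)
  finally have ipa: "ip x (A *\<^sub>v y) = complex_of_real (opnorm A)" .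
  note k = K1[OF A n x y(1) xn y(2) ipa]
  have "(A * adj A) *\<^sub>v x = A *\<^sub>v (complex_of_real (opnorm A) \<cdot>\<^sub>v y)" using M_vec[OF A x] k by simp
  also have "\<dots> = complex_of_real (opnorm A) \<cdot>\<^sub>v (A *\<^sub>v y)" by (rule mult_mat_vec[OF A y(1)])
  also have "\<dots> = complex_of_real ((opnorm A)^2) \<cdot>\<^sub>v x" using k(1) by (simp add: smult_smult_assoc power2_eq_square)
  finally show ?thesis using x xn by blast
qed

lemma largest_eig: assumes A: "A \<in> carrier_mat n n" and n: "0 < n" and a: "0 < opnorm A"
  shows "largest_eigenvalue (A * adj A) = (opnorm A)^2"
proof -
  have M: "A * adj A \<in> carrier_mat n n" using A by simp
  have "{e. eigenvalue (A * adj A) e} = {e. poly (char_poly (A * adj A)) e = 0}"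
    using eigenvalue_root_char_poly[OF M] by simp
  moreover have "char_poly (A * adj A) \<noteq> 0"
    using degree_monic_char_poly[OF M] by auto
  ultimately have fin: "finite {e. eigenvalue (A * adj A) e}" using poly_roots_finite by metis
  obtain x where x: "x \<in> carrier_vec n" "vnorm x = 1" "(A * adj A) *\<^sub>v x = complex_of_real ((opnorm A)^2) \<cdot>\<^sub>v x"
    using top_vec[OF A n a] by blast
  have "x \<noteq> 0\<^sub>v n" using x(2) by auto
  hence "eigenvalue (A * adj A) (complex_of_real ((opnorm A)^2))"
    unfolding eigenvalue_def eigenvector_def using x A by (intro exI[of _ x]) auto
  hence mem: "(opnorm A)^2 \<in> Re ` {e. eigenvalue (A * adj A) e}"
    by (metis (mono_tags) Re_complex_of_real image_eqI mem_Collect_eq)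
  show ?thesis unfolding largest_eigenvalue_def
    by (rule Max_eqI) (use fin mem M_bound[OF A n] in auto)
qed

lemma K2:
  assumes A: "A \<in> carrier_mat n n" and a: "0 < opnorm A"
    and x: "x \<in> carrier_vec n" and xn: "vnorm x = 1"
    and Mx: "(A * adj A) *\<^sub>v x = complex_of_real ((opnorm A)^2) \<cdot>\<^sub>v x"
  defines "y \<equiv> complex_of_real (1 / opnorm A) \<cdot>\<^sub>v (adj A *\<^sub>v x)"
  shows "y \<in> carrier_vec n" "vnorm y = 1" "ip x (A *\<^sub>v y) = complex_of_real (opnorm A)"
proof -
  have Ax: "adj A *\<^sub>v x \<in> carrier_vec n" using adj_carrier[OF A] x by simp
  show y: "y \<in> carrier_vec n" using Ax by (simp add: y_def)
  have ipx: "ip x x = 1" using ip_self[of x] xn by simp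
  have key: "ip x (A *\<^sub>v (adj A *\<^sub>v x)) = complex_of_real ((opnorm A)^2)"
    using M_vec[OF A x] Mx ip_smult_right[OF x x, of "complex_of_real ((opnorm A)^2)"] ipx by simp
  have "ip x (A *\<^sub>v y) = complex_of_real (1 / opnorm A) * ip x (A *\<^sub>v (adj A *\<^sub>v x))"
    unfolding y_def using mult_mat_vec[OF A Ax] ip_smult_right[OF x] A Ax by simp
  also have "\<dots> = complex_of_real (opnorm A)" using a by (simp add: key power2_eq_square)
  finally show "ip x (A *\<^sub>v y) = complex_of_real (opnorm A)" .
  have "ip y y = cnj (complex_of_real (1 / opnorm A)) * (complex_of_real (1 / opnorm A) * ip (adj A *\<^sub>v x) (adj A *\<^sub>v x))"
    unfolding y_def using ip_smult_left[OF Ax] ip_smult_right[OF Ax Ax] Ax by simp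
  also have "ip (adj A *\<^sub>v x) (adj A *\<^sub>v x) = ip x (A *\<^sub>v (adj A *\<^sub>v x))"
    using ip_adj[OF A x Ax] by simp
  finally have "ip y y = 1" using a by (simp add: key power2_eq_square)
  hence "(vnorm y)^2 = 1" using ip_self[of y] by (metis of_real_eq_1_iff)
  thus "vnorm y = 1" using vnorm_nonneg[of y] by (simp add: power2_eq_1_iff)
qed


lemma cprod_ip: "x \<in> carrier_vec n \<Longrightarrow> y \<in> carrier_vec n \<Longrightarrow> y \<bullet>c x = ip x y"
  unfolding ip_def scalar_prod_def by (auto simp: mult.commute atLeast0LessThan intro: sum.cong)

lemma adj_mult_vec_index: assumes M: "M \<in> carrier_mat m k" and w: "w \<in> carrier_vec m" and i: "i < k"
  shows "(adj M *\<^sub>v w) $ i = ip (col M i) w"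
  using M w i by (auto simp: mult_mat_vec_def scalar_prod_def ip_def atLeast0LessThan intro!: sum.cong)

lemma adj_mult_index: assumes M: "M \<in> carrier_mat m k" and i: "i < k" and j: "j < k"
  shows "(adj M * M) $$ (i,j) = ip (col M i) (col M j)"
  using M i j by (auto simp: scalar_prod_def ip_def atLeast0LessThan intro!: sum.cong)

lemma zero_mat_mult_vec': "c \<in> carrier_vec k \<Longrightarrow> (0\<^sub>m m k :: complex mat) *\<^sub>v c = 0\<^sub>v m"
  by (intro eq_vecI) (auto simp: mult_mat_vec_def scalar_prod_def)

lemma onb_exists:
  fixes N :: "complex mat"
  assumes N: "N \<in> carrier_mat n n"
  shows "\<exists>k U. U \<in> carrier_mat n k \<and> adj U * U = 1\<^sub>m k \<and> {U *\<^sub>v c | c. c \<in> carrier_vec k} = mat_kernel N"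
proof -
  interpret K: kernel n n N using N by (simp add: kernel_def)
  obtain Bs where Bs: "finite Bs" "K.basis Bs" using kernel_basis_exists[OF N] by blast
  have B1: "\<not> K.lin_dep Bs" "K.span Bs = mat_kernel N" "Bs \<subseteq> mat_kernel N"
    using Bs(2) unfolding K.Ker.basis_def by auto
  have B2: "\<not> K.NC.lin_dep Bs" using B1(1) K.lindep_same[OF B1(3)] by simp
  have B3: "K.NC.span Bs = mat_kernel N" using B1(2) K.span_same[OF B1(3)] by simp
  obtain ws where ws: "set ws = Bs" "distinct ws" using finite_distinct_list[OF Bs(1)] by blast
  have kc: "mat_kernel N \<subseteq> carrier_vec n" using mat_kernel_carrier[OF N] .
  have wsc: "set ws \<subseteq> carrier_vec n" using B1(3) ws kc by auto
  define us where "us = gram_schmidt n ws"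
  note gs = cof_vec_space.gram_schmidt_result[OF wsc ws(2) _ us_def]
  have usspan: "K.NC.span (set us) = mat_kernel N" using gs(1) B2 B3 ws by simp
  have orth: "corthogonal us" using gs B2 ws by simp
  have usc: "set us \<subseteq> carrier_vec n" using gs B2 ws by simp
  define k where "k = length us"
  have usi: "us ! i \<in> carrier_vec n" if "i < k" for i using usc that k_def by auto
  have usk: "us ! i \<in> mat_kernel N" if "i < k" for i
    using K.NC.span_mem[OF usc, of "us ! i"] that usspan k_def by auto
  have ipus: "ip (us ! i) (us ! j) = 0 \<longleftrightarrow> i \<noteq> j" if "i < k" "j < k" for i j
    using corthogonalD[OF orth, of j i] that cprod_ip[OF usi usi] k_def by (auto simp: cprod_ip[OF usi[OF that(1)] usi[OF that(2)]])
  have nz: "vnorm (us ! i) \<noteq> 0" if "i < k" for i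
  proof
    assume "vnorm (us ! i) = 0"
    hence "ip (us ! i) (us ! i) = 0" by (simp add: ip_self)
    thus False using ipus[OF that that] by simp
  qed
  define cs where "cs i = complex_of_real (1 / vnorm (us ! i))" for i
  have csnz: "cs i \<noteq> 0" if "i < k" for i using nz[OF that] by (simp add: cs_def)
  define vs where "vs = map (\<lambda>i. cs i \<cdot>\<^sub>v (us ! i)) [0..<k]"
  define U where "U = mat_of_cols n vs"
  define U0 where "U0 = mat_of_cols n us"
  have lvs: "length vs = k" by (simp add: vs_def)
  have U: "U \<in> carrier_mat n k" using mat_of_cols_carrier(1)[of n vs] lvs by (simp add: U_def)
  have U0: "U0 \<in> carrier_mat n k" by (simp add: U0_def k_def)
  have colU: "col U i = cs i \<cdot>\<^sub>v (us ! i)" if "i < k" for i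
    unfolding U_def using that usi[OF that] by (subst col_mat_of_cols) (auto simp: vs_def)
  have colU0: "col U0 i = us ! i" if "i < k" for i
    unfolding U0_def using that usi[OF that] by (subst col_mat_of_cols) (auto simp: k_def)
  have UU: "adj U * U = 1\<^sub>m k"
  proof (rule eq_matI)
    fix i j assume i: "i < dim_row (1\<^sub>m k)" and j: "j < dim_col (1\<^sub>m k)"
    hence i: "i < k" and j: "j < k" by auto
    have "(adj U * U) $$ (i,j) = ip (col U i) (col U j)" by (rule adj_mult_index[OF U i j])
    also have "\<dots> = cnj (cs i) * (cs j * ip (us ! i) (us ! j))"
      unfolding colU[OF i] colU[OF j] using usi[OF i] usi[OF j]
      by (simp add: ip_smult_left ip_smult_right)
    also have "\<dots> = 1\<^sub>m k $$ (i,j)"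
    proof (cases "i = j")
      case True
      thus ?thesis using i nz[OF i] by (simp add: cs_def ip_self power2_eq_square)
    next
      case False
      thus ?thesis using i j ipus[OF i j] by simp
    qed
    finally show "(adj U * U) $$ (i,j) = 1\<^sub>m k $$ (i,j)" .
  qed (use U in auto)
  have NU: "N * U = 0\<^sub>m n k"
  proof (rule eq_matI)
    fix r j assume r: "r < dim_row (0\<^sub>m n k :: complex mat)" and j: "j < dim_col (0\<^sub>m n k :: complex mat)"
    hence r: "r < n" and j: "j < k" by auto
    have "(N * U) $$ (r,j) = (N *\<^sub>v col U j) $ r" using N U r j by simp
    also have "N *\<^sub>v col U j = cs j \<cdot>\<^sub>v (N *\<^sub>v us ! j)"
      unfolding colU[OF j] by (rule mult_mat_vec[OF N usi[OF j]])
    also have "N *\<^sub>v us ! j = 0\<^sub>v n" using mat_kernelD(2)[OF N usk[OF j]] .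
    finally show "(N * U) $$ (r,j) = 0\<^sub>m n k $$ (r,j)" using r j by simp
  qed (use N U in auto)
  have "{U *\<^sub>v c | c. c \<in> carrier_vec k} = mat_kernel N"
  proof (intro equalityI subsetI)
    fix v assume "v \<in> {U *\<^sub>v c | c. c \<in> carrier_vec k}"
    then obtain c where c: "c \<in> carrier_vec k" "v = U *\<^sub>v c" by blast
    have "N *\<^sub>v v = (N * U) *\<^sub>v c" using N U c by simp
    also have "\<dots> = 0\<^sub>v n" using NU c by (simp add: zero_mat_mult_vec')
    finally show "v \<in> mat_kernel N" using mat_kernelI[OF N _] U c by simp
  next
    fix v assume v: "v \<in> mat_kernel N"
    have vc: "v \<in> carrier_vec n" using v kc by auto
    define d where "d = adj U *\<^sub>v v"
    have d: "d \<in> carrier_vec k" using adj_carrier[OF U] vc by (simp add: d_def)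
    have Ud: "U *\<^sub>v d \<in> carrier_vec n" using U d by simp
    define w where "w = v - U *\<^sub>v d"
    have wc: "w \<in> carrier_vec n" using vc Ud by (simp add: w_def)
    have "N *\<^sub>v w = N *\<^sub>v v - N *\<^sub>v (U *\<^sub>v d)"
      unfolding w_def by (rule mult_minus_distrib_mat_vec[OF N vc Ud])
    also have "N *\<^sub>v (U *\<^sub>v d) = (N * U) *\<^sub>v d" using N U d by simp
    also have "\<dots> = 0\<^sub>v n" using NU d by (simp add: zero_mat_mult_vec')
    also have "N *\<^sub>v v = 0\<^sub>v n" using mat_kernelD(2)[OF N v] .
    finally have "N *\<^sub>v w = 0\<^sub>v n" by simp
    hence wk: "w \<in> mat_kernel N" using mat_kernelI[OF N wc] by simp
    have "adj U *\<^sub>v w = adj U *\<^sub>v v - adj U *\<^sub>v (U *\<^sub>v d)"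
      unfolding w_def by (rule mult_minus_distrib_mat_vec[OF adj_carrier[OF U] vc Ud])
    also have "adj U *\<^sub>v (U *\<^sub>v d) = (adj U * U) *\<^sub>v d"
      by (rule assoc_mult_mat_vec[OF adj_carrier[OF U] U d, symmetric])
    also have "\<dots> = d" using UU d by simp
    finally have Uw: "adj U *\<^sub>v w = 0\<^sub>v k" unfolding d_def[symmetric] using d by simp
    have ipw: "ip (us ! i) w = 0" if i: "i < k" for i
    proof -
      have "0 = (adj U *\<^sub>v w) $ i" using Uw i by simp
      also have "\<dots> = ip (col U i) w" by (rule adj_mult_vec_index[OF U wc i])
      also have "\<dots> = cnj (cs i) * ip (us ! i) w" unfolding colU[OF i] using usi[OF i] wc by (simp add: ip_smult_left)
      finally show ?thesis using csnz[OF i] by simp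
    qed
    have U0w: "adj U0 *\<^sub>v w = 0\<^sub>v k"
    proof (rule eq_vecI)
      fix i assume "i < dim_vec (0\<^sub>v k :: complex vec)"
      hence i: "i < k" by simp
      have "(adj U0 *\<^sub>v w) $ i = ip (col U0 i) w" by (rule adj_mult_vec_index[OF U0 wc i])
      thus "(adj U0 *\<^sub>v w) $ i = 0\<^sub>v k $ i" using ipw[OF i] colU0[OF i] i by simp
    qed (use U0 in simp)
    have "w \<in> K.NC.span (set us)" using wk usspan by simp
    hence "w \<in> K.NC.span_list us" using idom_vec.span_list_as_span[OF usc] by simp
    then obtain f where f: "w = K.NC.lincomb_list f us" unfolding K.NC.span_list_def by blast
    also have "\<dots> = U0 *\<^sub>v vec k f" unfolding U0_def k_def
      by (rule vec_module.lincomb_list_as_mat_mult) (use usc in auto)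
    finally have wU0: "w = U0 *\<^sub>v vec k f" .
    have "ip w w = ip w (U0 *\<^sub>v vec k f)" using wU0 by simp
    also have "\<dots> = ip (adj U0 *\<^sub>v w) (vec k f)" by (rule ip_adj[OF U0 wc]) simp
    also have "\<dots> = 0" unfolding U0w by (simp add: ip_def)
    finally have "vnorm w = 0" by (simp add: ip_self)
    hence "w = 0\<^sub>v n" using vnorm_zero wc by blast
    have "v = U *\<^sub>v d"
    proof (rule eq_vecI)
      fix i assume i: "i < dim_vec (U *\<^sub>v d)"
      hence i': "i < n" using U by simp
      have "w $ i = 0" using \<open>w = 0\<^sub>v n\<close> i' by simp
      moreover have "w $ i = v $ i - (U *\<^sub>v d) $ i"
        unfolding w_def using Ud i' by (simp only: index_minus_vec carrier_vecD)
      ultimately show "v $ i = (U *\<^sub>v d) $ i" by simp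
    qed (use vc U in simp)
    thus "v \<in> {U *\<^sub>v c | c. c \<in> carrier_vec k}" using d by blast
  qed
  thus ?thesis using U UU by blast
qed


lemma minus_eq0: fixes a b :: "complex vec" assumes a: "a \<in> carrier_vec n" and b: "b \<in> carrier_vec n"
  shows "(a - b = 0\<^sub>v n) \<longleftrightarrow> a = b"
proof
  assume h: "a - b = 0\<^sub>v n"
  show "a = b"
  proof (rule eq_vecI)
    fix i assume i: "i < dim_vec b"
    have "(a - b) $ i = 0" using h i b by simp
    moreover have "(a - b) $ i = a $ i - b $ i" using i by (simp only: index_minus_vec)
    ultimately show "a $ i = b $ i" by simp
  qed (use a b in simp)
next
  assume "a = b" thus "a - b = 0\<^sub>v n" using b by (intro eq_vecI) auto
qed

lemma eig_kernel: assumes M: "M \<in> carrier_mat n n"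
  shows "eigenspace M \<mu> = mat_kernel (M - \<mu> \<cdot>\<^sub>m 1\<^sub>m n)"
proof -
  have I: "\<mu> \<cdot>\<^sub>m 1\<^sub>m n \<in> carrier_mat n n" by simp
  have N: "M - \<mu> \<cdot>\<^sub>m 1\<^sub>m n \<in> carrier_mat n n" by (rule minus_carrier_mat[OF I])
  have key: "(M - \<mu> \<cdot>\<^sub>m 1\<^sub>m n) *\<^sub>v v = M *\<^sub>v v - \<mu> \<cdot>\<^sub>v v" if v: "v \<in> carrier_vec n" for v
  proof -
    have "(M - \<mu> \<cdot>\<^sub>m 1\<^sub>m n) *\<^sub>v v = M *\<^sub>v v - (\<mu> \<cdot>\<^sub>m 1\<^sub>m n) *\<^sub>v v"
      by (rule minus_mult_distrib_mat_vec[OF M I v])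
    also have "(\<mu> \<cdot>\<^sub>m 1\<^sub>m n) *\<^sub>v v = \<mu> \<cdot>\<^sub>v v"
      using smult_mat_mult_vec[OF one_carrier_mat v, of \<mu>] v by simp
    finally show ?thesis .
  qed
  show ?thesis
  proof (intro equalityI subsetI)
    fix v assume "v \<in> eigenspace M \<mu>"
    hence v: "v \<in> carrier_vec n" "M *\<^sub>v v = \<mu> \<cdot>\<^sub>v v" using M unfolding eigenspace_def by auto
    have "(M - \<mu> \<cdot>\<^sub>m 1\<^sub>m n) *\<^sub>v v = 0\<^sub>v n" using key[OF v(1)] v minus_eq0[of "M *\<^sub>v v" n "\<mu> \<cdot>\<^sub>v v"] M by simp
    thus "v \<in> mat_kernel (M - \<mu> \<cdot>\<^sub>m 1\<^sub>m n)" using mat_kernelI[OF N v(1)] by simp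
  next
    fix v assume "v \<in> mat_kernel (M - \<mu> \<cdot>\<^sub>m 1\<^sub>m n)"
    hence v: "v \<in> carrier_vec n" "(M - \<mu> \<cdot>\<^sub>m 1\<^sub>m n) *\<^sub>v v = 0\<^sub>v n" using mat_kernelD[OF N] by auto
    have "M *\<^sub>v v = \<mu> \<cdot>\<^sub>v v" using key[OF v(1)] v minus_eq0[of "M *\<^sub>v v" n "\<mu> \<cdot>\<^sub>v v"] M by simp
    thus "v \<in> eigenspace M \<mu>" using v M unfolding eigenspace_def by simp
  qed
qed

lemma ip_U: assumes U: "U \<in> carrier_mat n k" and UU: "adj U * U = 1\<^sub>m k" and c: "c \<in> carrier_vec k"
  shows "ip (U *\<^sub>v c) (U *\<^sub>v c) = ip c c"
proof -
  have Uc: "U *\<^sub>v c \<in> carrier_vec n" using U c by simp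
  have "ip (U *\<^sub>v c) (U *\<^sub>v c) = ip (adj U *\<^sub>v (U *\<^sub>v c)) c"
    using ip_adj[OF U Uc c] by simp
  also have "adj U *\<^sub>v (U *\<^sub>v c) = (adj U * U) *\<^sub>v c"
    by (rule assoc_mult_mat_vec[OF adj_carrier[OF U] U c, symmetric])
  also have "\<dots> = c" using UU c by simp
  finally show ?thesis .
qed

lemma sform_UBV: assumes U: "U \<in> carrier_mat n k" and B: "B \<in> carrier_mat n n" and V: "V \<in> carrier_mat n k"
  and c: "c \<in> carrier_vec k"
  shows "sform c (l \<cdot>\<^sub>m (adj U * B * V)) c = l * ip (U *\<^sub>v c) (B *\<^sub>v (V *\<^sub>v c))"
proof -
  have UB: "adj U * B \<in> carrier_mat k n" by (rule mult_carrier_mat[OF adj_carrier[OF U] B])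
  have Vc: "V *\<^sub>v c \<in> carrier_vec n" using V c by simp
  have BVc: "B *\<^sub>v (V *\<^sub>v c) \<in> carrier_vec n" using B Vc by simp
  have "(adj U * B * V) *\<^sub>v c = adj U *\<^sub>v (B *\<^sub>v (V *\<^sub>v c))"
    using assoc_mult_mat_vec[OF UB V c] assoc_mult_mat_vec[OF adj_carrier[OF U] B Vc] by simp
  moreover have "(l \<cdot>\<^sub>m (adj U * B * V)) *\<^sub>v c = l \<cdot>\<^sub>v ((adj U * B * V) *\<^sub>v c)"
    by (rule smult_mat_mult_vec) (use UB V c in auto)
  ultimately have "sform c (l \<cdot>\<^sub>m (adj U * B * V)) c = ip c (l \<cdot>\<^sub>v (adj U *\<^sub>v (B *\<^sub>v (V *\<^sub>v c))))"
    by (simp add: sform_ip)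
  also have "\<dots> = l * ip c (adj U *\<^sub>v (B *\<^sub>v (V *\<^sub>v c)))"
    by (rule ip_smult_right[OF c]) (use adj_carrier[OF U] BVc in simp)
  also have "ip c (adj U *\<^sub>v (B *\<^sub>v (V *\<^sub>v c))) = ip (U *\<^sub>v c) (B *\<^sub>v (V *\<^sub>v c))"
    using ip_adj[OF adj_carrier[OF U] c BVc] by simp
  finally show ?thesis .
qed

lemma V_mult: assumes A: "A \<in> carrier_mat n n" and U: "U \<in> carrier_mat n k" and c: "c \<in> carrier_vec k"
  shows "((1 / complex_of_real r) \<cdot>\<^sub>m (adj A * U)) *\<^sub>v c = complex_of_real (1 / r) \<cdot>\<^sub>v (adj A *\<^sub>v (U *\<^sub>v c))"
proof -
  have AU: "adj A * U \<in> carrier_mat n k" by (rule mult_carrier_mat[OF adj_carrier[OF A] U])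
  have "((1 / complex_of_real r) \<cdot>\<^sub>m (adj A * U)) *\<^sub>v c = (1 / complex_of_real r) \<cdot>\<^sub>v ((adj A * U) *\<^sub>v c)"
    by (rule smult_mat_mult_vec[OF AU c])
  also have "(adj A * U) *\<^sub>v c = adj A *\<^sub>v (U *\<^sub>v c)" by (rule assoc_mult_mat_vec[OF adj_carrier[OF A] U c])
  finally show ?thesis by simp
qed

lemma unit_of_ip: "ip v v = 1 \<Longrightarrow> vnorm v = 1"
proof -
  assume "ip v v = 1"
  hence "(vnorm v)^2 = 1" using ip_self[of v] by (metis of_real_eq_1_iff)
  thus "vnorm v = 1" using vnorm_nonneg[of v] by (simp add: power2_eq_1_iff)
qed

theorem proposition3p1:
  fixes A B :: "complex mat" and n :: nat
  assumes "A \<in> carrier_mat n n" and "B \<in> carrier_mat n n" and "A \<noteq> 0\<^sub>m n n"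
  shows "(opnorm_parallel A B \<longleftrightarrow>
          (\<exists>x y. x \<in> carrier_vec n \<and> y \<in> carrier_vec n \<and> vnorm x = 1 \<and> vnorm y = 1 \<and>
                 complex_of_real (opnorm A) = sform x A y \<and> cmod (sform x B y) = opnorm B))
       \<and> (opnorm_parallel A B \<longleftrightarrow>
          (\<forall>U k. U \<in> carrier_mat n k \<longrightarrow>
              orthonormal_basis_mat U
                (eigenspace (A * adj A) (complex_of_real (largest_eigenvalue (A * adj A)))) \<longrightarrow>
              (let V = (1 / complex_of_real (opnorm A)) \<cdot>\<^sub>m (adj A * U) in
               \<exists>l. cmod l = 1 \<and>
                  - complex_of_real (opnorm B) \<in> numerical_range (l \<cdot>\<^sub>m (adj U * B * V)))))"
proof -
  note A = assms(1) and B = assms(2)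
  have n: "0 < n" and a: "0 < opnorm A" using opnorm_pos[OF A assms(3)] by auto
  have bnn: "0 \<le> opnorm B" using opnorm_nonneg[OF B n] .
  have eq1: "opnorm_parallel A B \<longleftrightarrow>
          (\<exists>x y. x \<in> carrier_vec n \<and> y \<in> carrier_vec n \<and> vnorm x = 1 \<and> vnorm y = 1 \<and>
                 complex_of_real (opnorm A) = sform x A y \<and> cmod (sform x B y) = opnorm B)"
    using par_to_ii[OF A B n a] ii_to_par[OF A B n] by blast
  have M: "A * adj A \<in> carrier_mat n n" using A by simp
  define ES where "ES = {v \<in> carrier_vec n. (A * adj A) *\<^sub>v v = complex_of_real ((opnorm A)^2) \<cdot>\<^sub>v v}"
  have E: "eigenspace (A * adj A) (complex_of_real (largest_eigenvalue (A * adj A))) = ES"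
    unfolding largest_eig[OF A n a] eigenspace_def ES_def using A by simp
  have eq2: "opnorm_parallel A B \<longleftrightarrow>
          (\<forall>U k. U \<in> carrier_mat n k \<longrightarrow>
              orthonormal_basis_mat U
                (eigenspace (A * adj A) (complex_of_real (largest_eigenvalue (A * adj A)))) \<longrightarrow>
              (let V = (1 / complex_of_real (opnorm A)) \<cdot>\<^sub>m (adj A * U) in
               \<exists>l. cmod l = 1 \<and>
                  - complex_of_real (opnorm B) \<in> numerical_range (l \<cdot>\<^sub>m (adj U * B * V))))"
  proof
    assume par: "opnorm_parallel A B"
    obtain x y where x: "x \<in> carrier_vec n" and y: "y \<in> carrier_vec n" and xn: "vnorm x = 1" and yn: "vnorm y = 1"
      and sa: "complex_of_real (opnorm A) = sform x A y" and sb: "cmod (sform x B y) = opnorm B"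
      using par_to_ii[OF A B n a par] by blast
    have ipa: "ip x (A *\<^sub>v y) = complex_of_real (opnorm A)" using sa by (simp add: sform_ip)
    note k = K1[OF A n x y xn yn ipa]
    have "(A * adj A) *\<^sub>v x = A *\<^sub>v (complex_of_real (opnorm A) \<cdot>\<^sub>v y)" using M_vec[OF A x] k by simp
    also have "\<dots> = complex_of_real (opnorm A) \<cdot>\<^sub>v (A *\<^sub>v y)" by (rule mult_mat_vec[OF A y])
    also have "\<dots> = complex_of_real ((opnorm A)^2) \<cdot>\<^sub>v x" using k(1) by (simp add: smult_smult_assoc power2_eq_square)
    finally have xE: "x \<in> ES" using x by (simp add: ES_def)
    define t where "t = ip x (B *\<^sub>v y)"
    have tb: "cmod t = opnorm B" using sb by (simp add: t_def sform_ip)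
    define l where "l = (if t = 0 then 1 else - (cnj t / complex_of_real (cmod t)))"
    have l: "cmod l = 1" by (simp add: l_def norm_divide)
    have lt: "l * t = - complex_of_real (cmod t)"
    proof (cases "t = 0")
      case True thus ?thesis by (simp add: l_def)
    next
      case False
      have "l * t = - ((cnj t * t) / complex_of_real (cmod t))" using False by (simp add: l_def)
      also have "cnj t * t = complex_of_real (cmod t) * complex_of_real (cmod t)"
        by (metis complex_norm_square mult.commute of_real_mult power2_eq_square)
      finally show ?thesis using False by simp
    qed
    show "\<forall>U k. U \<in> carrier_mat n k \<longrightarrow>
              orthonormal_basis_mat U
                (eigenspace (A * adj A) (complex_of_real (largest_eigenvalue (A * adj A)))) \<longrightarrow>
              (let V = (1 / complex_of_real (opnorm A)) \<cdot>\<^sub>m (adj A * U) in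
               \<exists>l. cmod l = 1 \<and>
                  - complex_of_real (opnorm B) \<in> numerical_range (l \<cdot>\<^sub>m (adj U * B * V)))"
    proof (intro allI impI)
      fix U k assume U: "U \<in> carrier_mat n k"
        and onb: "orthonormal_basis_mat U (eigenspace (A * adj A) (complex_of_real (largest_eigenvalue (A * adj A))))"
      have UU: "adj U * U = 1\<^sub>m k" and rng: "{U *\<^sub>v c | c. c \<in> carrier_vec k} = ES"
        using onb U unfolding orthonormal_basis_mat_def E by auto
      obtain c where c: "c \<in> carrier_vec k" "x = U *\<^sub>v c" using xE rng by blast
      define V where "V = (1 / complex_of_real (opnorm A)) \<cdot>\<^sub>m (adj A * U)"
      have V: "V \<in> carrier_mat n k" unfolding V_def by (rule smult_carrier_mat[OF mult_carrier_mat[OF adj_carrier[OF A] U]])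
      have Vc: "V *\<^sub>v c = y"
        using V_mult[OF A U c(1), of "opnorm A"] c(2) k(2) a
        by (simp add: V_def smult_smult_assoc)
      have "ip c c = ip x x" using ip_U[OF U UU c(1)] c(2) by simp
      also have "\<dots> = 1" using ip_self[of x] xn by simp
      finally have cn: "vnorm c = 1" by (rule unit_of_ip)
      have "sform c (l \<cdot>\<^sub>m (adj U * B * V)) c = l * t"
        using sform_UBV[OF U B V c(1), of l] c(2) Vc by (simp add: t_def)
      hence "- complex_of_real (opnorm B) = sform c (l \<cdot>\<^sub>m (adj U * B * V)) c" using lt tb by simp
      moreover have "c \<in> carrier_vec (dim_col (l \<cdot>\<^sub>m (adj U * B * V)))" using c V by simp
      ultimately have "- complex_of_real (opnorm B) \<in> numerical_range (l \<cdot>\<^sub>m (adj U * B * V))"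
        unfolding numerical_range_def using cn by blast
      thus "let V = (1 / complex_of_real (opnorm A)) \<cdot>\<^sub>m (adj A * U) in
               \<exists>l. cmod l = 1 \<and>
                  - complex_of_real (opnorm B) \<in> numerical_range (l \<cdot>\<^sub>m (adj U * B * V))"
        unfolding Let_def V_def[symmetric] using l by blast
    qed
  next
    assume H: "\<forall>U k. U \<in> carrier_mat n k \<longrightarrow>
              orthonormal_basis_mat U
                (eigenspace (A * adj A) (complex_of_real (largest_eigenvalue (A * adj A)))) \<longrightarrow>
              (let V = (1 / complex_of_real (opnorm A)) \<cdot>\<^sub>m (adj A * U) in
               \<exists>l. cmod l = 1 \<and>
                  - complex_of_real (opnorm B) \<in> numerical_range (l \<cdot>\<^sub>m (adj U * B * V)))"
    define N where "N = A * adj A - complex_of_real ((opnorm A)^2) \<cdot>\<^sub>m 1\<^sub>m n"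
    have N: "N \<in> carrier_mat n n" unfolding N_def by (rule minus_carrier_mat) simp
    have ESk: "ES = mat_kernel N"
      unfolding N_def eig_kernel[OF M, symmetric] ES_def eigenspace_def using M A by simp
    obtain k U where U: "U \<in> carrier_mat n k" and UU: "adj U * U = 1\<^sub>m k"
      and rng: "{U *\<^sub>v c | c. c \<in> carrier_vec k} = ES"
      using onb_exists[OF N] ESk by blast
    have onb: "orthonormal_basis_mat U (eigenspace (A * adj A) (complex_of_real (largest_eigenvalue (A * adj A))))"
      unfolding orthonormal_basis_mat_def E using U UU rng by simp
    define V where "V = (1 / complex_of_real (opnorm A)) \<cdot>\<^sub>m (adj A * U)"
    have V: "V \<in> carrier_mat n k" unfolding V_def by (rule smult_carrier_mat[OF mult_carrier_mat[OF adj_carrier[OF A] U]])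
    obtain l where l: "cmod l = 1" and nr: "- complex_of_real (opnorm B) \<in> numerical_range (l \<cdot>\<^sub>m (adj U * B * V))"
      using H U onb unfolding Let_def V_def by blast
    obtain z where z: "z \<in> carrier_vec k" "vnorm z = 1" "sform z (l \<cdot>\<^sub>m (adj U * B * V)) z = - complex_of_real (opnorm B)"
      using nr V unfolding numerical_range_def by auto
    define x where "x = U *\<^sub>v z"
    have x: "x \<in> carrier_vec n" using U z by (simp add: x_def)
    have "ip x x = ip z z" unfolding x_def by (rule ip_U[OF U UU z(1)])
    also have "\<dots> = 1" using ip_self[of z] z(2) by simp
    finally have xn: "vnorm x = 1" by (rule unit_of_ip)
    have "x \<in> ES" using rng z(1) x_def by blast
    hence Mx: "(A * adj A) *\<^sub>v x = complex_of_real ((opnorm A)^2) \<cdot>\<^sub>v x" by (simp add: ES_def)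
    define y where "y = complex_of_real (1 / opnorm A) \<cdot>\<^sub>v (adj A *\<^sub>v x)"
    note k2 = K2[OF A a x xn Mx, folded y_def]
    have Vz: "V *\<^sub>v z = y" using V_mult[OF A U z(1), of "opnorm A"] by (simp add: V_def y_def x_def)
    have "l * ip x (B *\<^sub>v y) = - complex_of_real (opnorm B)"
      using sform_UBV[OF U B V z(1), of l] z(3) Vz by (simp add: x_def)
    hence "cmod (ip x (B *\<^sub>v y)) = opnorm B"
      using l bnn by (metis abs_of_nonneg mult_cancel_right1 norm_minus_cancel norm_mult norm_of_real)
    moreover have "complex_of_real (opnorm A) = sform x A y" using k2(3) by (simp add: sform_ip)
    ultimately show "opnorm_parallel A B"
      using ii_to_par[OF A B n x k2(1) xn k2(2)] by (simp add: sform_ip)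
  qed
  show ?thesis using eq1 eq2 by blast
qed

end
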